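(* Let $C\subseteq\mathbb{F}_2^n$ be a code. Then (1) $\displaystyle \mathrm{PUD}(C)\le 1-\frac{1}{|C|}\sum_{j=0}^n W^{\mathrm{H}}_j(C)\sum_{i=0}^n(1-q)^i(1-p)^{n-i}\sum_{s\in\mathcal S\left(\frac{\delta(C)+(\gamma-1)(i-j)}{2}\right)}\left(\frac{q}{1-p}\right)^s\lambda(i,j,s)$; (2) $\displaystyle \mathrm{PUD}(C)\le 1-\frac{1}{|C|}\sum_{j=0}^n W^{\mathrm{H}}_j(C)\sum_{i=0}^n(1-q)^i(1-p)^{n-i}\sum_{s\in\mathcal S\left(\frac{\hat\delta(C)+i(\gamma-1)}{2}\right)}\left(\frac{q}{1-p}\right)^s\lambda(i,j,s)$.
   Context: Let $n\ge2$ and fix reals $0<p\le q<1/2$. Let $\mathbb{P}^n(y\mid x)=\prod_{i=1}^n\mathbb{P}(y_i\mid x_i)$ where $\mathbb{P}(1\mid0)=p$, $\mathbb{P}(0\mid0)=1-p$, $\mathbb{P}(0\mid1)=q$, $\mathbb{P}(1\mid1)=1-q$. Let $\gamma:=\log_{q/(1-p)}\left(\frac{p}{1-q}\right)$. For $x\in\mathbb{F}_2^n$, $\omega^{\mathrm{H}}(x)=|\{i:x_i=1\}|$; for $a,b\in\{0,1\}$, $d_{ab}(y,x)=|\{i: y_i=a,\ x_i=b\}|$. Discrepancy: $\delta(y,x):=\gamma\,d_{10}(y,x)+d_{01}(y,x)$; symmetric discrepancy: $\hat\delta(y,x):=\delta(y,x)-\omega^{\mathrm{H}}(y)(\gamma-1)$.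 A code is $C\subseteq\mathbb{F}_2^n$ with $|C|\ge2$; $\delta(C)=\min\{\delta(x,x'):x,x'\in C,\ x\ne x'\}$, $\hat\delta(C)=\min\{\hat\delta(x,x'):x,x'\in C,\ x\ne x'\}$. $W^{\mathrm{H}}_j(C)$ is the number of codewords of Hamming weight $j$. The maximum likelihood decoder $D_C$ sends $y$ to $x$ if $x$ is the unique codeword maximizing $\mathbb{P}^n(y\mid x)$ and to a failure symbol $\mathbf f\notin\mathbb{F}_2^n$ otherwise; $\mathrm{PUD}(C):=\frac{1}{|C|}\sum_{x\in C}\sum_{y\in\mathbb{F}_2^n,\ D_C(y)\ne x}\mathbb{P}^n(y\mid x)$. Let $\mathcal S:=\{a+\gamma b:a,b\in\mathbb N\}$ and $\mathcal S(h):=\{s\in\mathcal S: 0\le s<h\}$. For real $a,b$, $\mathrm{Bin}(a,b)=\binom ab$ if $a,b\in\mathbb N$ and $0$ otherwise, and $\lambda(i,j,s):=\mathrm{Bin}\!\left(j,\frac{i\gamma-s+j}{\gamma+1}\right)\mathrm{Bin}\!\left(n-j,\frac{s-j+i}{\gamma+1}\right)$ (this equals the number of $y$ of weight $i$ with $\delta(y,x)=s$ for any fixed $x$ of weight $j$). *)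

theory Defs
  imports Complex_Main
begin

text \<open>Binary words of length n are represented as bool lists (True = 1).\<close>

definition F2n :: "nat \<Rightarrow> bool list set" where
  "F2n n = {x. length x = n}"

text \<open>Single-letter channel: chan p q a b = P(output a | input b).\<close>
definition chan :: "real \<Rightarrow> real \<Rightarrow> bool \<Rightarrow> bool \<Rightarrow> real" where
  "chan p q a b = (if b then (if a then 1 - q else q) else (if a then p else 1 - p))"

definition Pn :: "real \<Rightarrow> real \<Rightarrow> bool list \<Rightarrow> bool list \<Rightarrow> real" where
  "Pn p q y x = (\<Prod>i<length x. chan p q (y ! i) (x ! i))"

definition gam :: "real \<Rightarrow> real \<Rightarrow> real" where
  "gam p q = log (q / (1 - p)) (p / (1 - q))"

definition wtH :: "bool list \<Rightarrow> nat" where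
  "wtH x = card {i. i < length x \<and> x ! i}"

definition dab :: "bool \<Rightarrow> bool \<Rightarrow> bool list \<Rightarrow> bool list \<Rightarrow> nat" where
  "dab a b y x = card {i. i < length x \<and> y ! i = a \<and> x ! i = b}"

definition disc :: "real \<Rightarrow> real \<Rightarrow> bool list \<Rightarrow> bool list \<Rightarrow> real" where
  "disc p q y x = gam p q * real (dab True False y x) + real (dab False True y x)"

definition sdisc :: "real \<Rightarrow> real \<Rightarrow> bool list \<Rightarrow> bool list \<Rightarrow> real" where
  "sdisc p q y x = disc p q y x - real (wtH y) * (gam p q - 1)"

definition code_disc :: "real \<Rightarrow> real \<Rightarrow> bool list set \<Rightarrow> real" where
  "code_disc p q C = Min {disc p q x x' | x x'. x \<in> C \<and> x' \<in> C \<and> x \<noteq> x'}"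

definition code_sdisc :: "real \<Rightarrow> real \<Rightarrow> bool list set \<Rightarrow> real" where
  "code_sdisc p q C = Min {sdisc p q x x' | x x'. x \<in> C \<and> x' \<in> C \<and> x \<noteq> x'}"

definition WH :: "bool list set \<Rightarrow> nat \<Rightarrow> nat" where
  "WH C j = card {x \<in> C. wtH x = j}"

text \<open>ML decoder; None plays the role of the failure symbol f.\<close>
definition MLdec :: "real \<Rightarrow> real \<Rightarrow> bool list set \<Rightarrow> bool list \<Rightarrow> bool list option" where
  "MLdec p q C y =
     (if \<exists>x\<in>C. \<forall>x'\<in>C. x' \<noteq> x \<longrightarrow> Pn p q y x' < Pn p q y x
      then Some (THE x. x \<in> C \<and> (\<forall>x'\<in>C. x' \<noteq> x \<longrightarrow> Pn p q y x' < Pn p q y x))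
      else None)"

definition PUD :: "real \<Rightarrow> real \<Rightarrow> nat \<Rightarrow> bool list set \<Rightarrow> real" where
  "PUD p q n C = (1 / real (card C)) *
     (\<Sum>x\<in>C. \<Sum>y\<in>{y \<in> F2n n. MLdec p q C y \<noteq> Some x}. Pn p q y x)"

definition Sset :: "real \<Rightarrow> real \<Rightarrow> real \<Rightarrow> real set" where
  "Sset p q h = {s. (\<exists>a b :: nat. s = real a + gam p q * real b) \<and> 0 \<le> s \<and> s < h}"

definition Bin :: "real \<Rightarrow> real \<Rightarrow> real" where
  "Bin a b = (if a \<in> \<nat> \<and> b \<in> \<nat> then real (nat \<lfloor>a\<rfloor> choose nat \<lfloor>b\<rfloor>) else 0)"

definition lam :: "real \<Rightarrow> real \<Rightarrow> nat \<Rightarrow> nat \<Rightarrow> nat \<Rightarrow> real \<Rightarrow> real" where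
  "lam p q n i j s =
     Bin (real j) ((real i * gam p q - s + real j) / (gam p q + 1)) *
     Bin (real n - real j) ((s - real j + real i) / (gam p q + 1))"

end

theory Submission
  imports Defs
begin

lemma count_split:
  assumes fA: "finite A" and XA: "X \<subseteq> A"
  shows "card {T. T \<subseteq> A \<and> card (T - X) = uu \<and> card (T \<inter> X) = vv}
         = (card X choose vv) * (card (A - X) choose uu)"
proof -
  let ?S = "{T. T \<subseteq> A \<and> card (T - X) = uu \<and> card (T \<inter> X) = vv}"
  let ?P = "{V. V \<subseteq> X \<and> card V = vv} \<times> {U. U \<subseteq> A - X \<and> card U = uu}"
  have inj: "inj_on (\<lambda>T. (T \<inter> X, T - X)) ?S"
  proof (rule inj_onI)
    fix x y assume "(x \<inter> X, x - X) = (y \<inter> X, y - X)"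
    then have "x \<inter> X = y \<inter> X" "x - X = y - X" by auto
    then show "x = y" by blast
  qed
  have im: "(\<lambda>T. (T \<inter> X, T - X)) ` ?S = ?P"
  proof
    show "(\<lambda>T. (T \<inter> X, T - X)) ` ?S \<subseteq> ?P" by auto
  next
    show "?P \<subseteq> (\<lambda>T. (T \<inter> X, T - X)) ` ?S"
    proof
      fix z assume "z \<in> ?P"
      then obtain V U where z: "z = (V, U)" and V: "V \<subseteq> X" "card V = vv"
        and U: "U \<subseteq> A - X" "card U = uu" by auto
      have e1: "(V \<union> U) \<inter> X = V" using V U by auto
      have e2: "(V \<union> U) - X = U" using V U by auto
      have "V \<union> U \<in> ?S" using V U XA e1 e2 by auto
      then show "z \<in> (\<lambda>T. (T \<inter> X, T - X)) ` ?S" using z e1 e2 by (auto intro!: image_eqI[where x="V \<union> U"])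
    qed
  qed
  have "card ?S = card ?P" using card_image[OF inj] im by simp
  also have "\<dots> = (card X choose vv) * (card (A - X) choose uu)"
  proof -
    have "finite X" using fA XA finite_subset by blast
    then show ?thesis
      using n_subsets[of X vv] n_subsets[of "A - X" uu] fA
      by (simp add: card_cartesian_product)
  qed
  finally show ?thesis .
qed

lemma key_equiv:
  fixes g s :: real and u v w ct j i :: real
  assumes g: "g > -1" and ct: "ct = v + u" and j: "j = v + w"
  shows "(ct = i \<and> g * u + w = s) \<longleftrightarrow>
         (u = (s - j + i) / (g + 1) \<and> v = (i * g - s + j) / (g + 1))"
proof -
  have g1: "g + 1 \<noteq> 0" using g by linarith
  show ?thesis
  proof
    assume H: "ct = i \<and> g * u + w = s"
    have "u * (g + 1) = s - j + i" using H ct j by (simp add: algebra_simps)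
    moreover have "v * (g + 1) = i * g - s + j"
    proof -
      have "i = u + v" "s = g * u + w" using H ct by auto
      then show ?thesis using j by (simp add: algebra_simps)
    qed
    ultimately show "u = (s - j + i) / (g + 1) \<and> v = (i * g - s + j) / (g + 1)"
      using g1 by (simp add: eq_divide_eq)
  next
    assume H: "u = (s - j + i) / (g + 1) \<and> v = (i * g - s + j) / (g + 1)"
    then have hu: "u * (g + 1) = s - j + i" and hv: "v * (g + 1) = i * g - s + j"
      using g1 by (simp_all add: eq_divide_eq)
    have "(u + v) * (g + 1) = i * (g + 1)" using hu hv by (simp add: algebra_simps)
    then have uv: "u + v = i" using g1 by simp
    have "(g * u + w) * (g + 1) = g * (u * (g + 1)) + j * (g + 1) - v * (g + 1)"
      using j by (simp add: algebra_simps)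
    also have "\<dots> = g * (s - j + i) + j * (g + 1) - (i * g - s + j)" using hu hv by simp
    also have "\<dots> = s * (g + 1)" by (simp add: algebra_simps)
    finally have "(g * u + w) * (g + 1) = s * (g + 1)" .
    then have "g * u + w = s" using g1 by simp
    then show "ct = i \<and> g * u + w = s" using uv ct by simp
  qed
qed

lemma count_cond:
  fixes g s :: real
  assumes fA: "finite A" and XA: "X \<subseteq> A" and g: "g > -1"
  shows "real (card {T. T \<subseteq> A \<and> card T = i \<and> g * real (card (T - X)) + real (card (X - T)) = s})
    = Bin (real (card X)) ((real i * g - s + real (card X)) / (g + 1)) *
      Bin (real (card A) - real (card X)) ((s - real (card X) + real i) / (g + 1))"
proof -
  define j where "j = card X"
  define U where "U = (s - real j + real i) / (g + 1)"
  define V where "V = (real i * g - s + real j) / (g + 1)"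
  have fX: "finite X" using fA XA finite_subset by blast
  have key: "(card T = i \<and> g * real (card (T - X)) + real (card (X - T)) = s) \<longleftrightarrow>
        (real (card (T - X)) = U \<and> real (card (T \<inter> X)) = V)" if TA: "T \<subseteq> A" for T
  proof -
    have fT: "finite T" using fA TA finite_subset by blast
    have c1: "card T = card (T \<inter> X) + card (T - X)" using card_Int_Diff[OF fT] by simp
    have c2: "card X = card (T \<inter> X) + card (X - T)" using card_Int_Diff[OF fX, of T]
      by (simp add: Int_commute)
    have "(real (card T) = real i \<and> g * real (card (T - X)) + real (card (X - T)) = s) \<longleftrightarrow>
        (real (card (T - X)) = U \<and> real (card (T \<inter> X)) = V)"
      unfolding U_def V_def
      by (rule key_equiv[OF g]) (use c1 c2 j_def in simp_all)
    then show ?thesis by simp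
  qed
  let ?S = "{T. T \<subseteq> A \<and> card T = i \<and> g * real (card (T - X)) + real (card (X - T)) = s}"
  have jA: "j \<le> card A" using card_mono[OF fA XA] j_def by simp
  have cAX: "card (A - X) = card A - j" using card_Diff_subset[OF fX XA] j_def by simp
  show ?thesis
  proof (cases "U \<in> \<nat> \<and> V \<in> \<nat>")
    case True
    then obtain uu vv where uu: "U = real uu" and vv: "V = real vv"
      by (auto elim!: Nats_cases)
    have "?S = {T. T \<subseteq> A \<and> card (T - X) = uu \<and> card (T \<inter> X) = vv}"
      using key uu vv by auto
    then have "card ?S = (j choose vv) * ((card A - j) choose uu)"
      using count_split[OF fA XA, of uu vv] cAX j_def by simp
    moreover have "real (card A) - real (card X) = real (card A - j)" using jA j_def by simp
    ultimately show ?thesis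
      unfolding Bin_def using uu vv j_def[symmetric] U_def V_def
      by (simp del: of_nat_diff)
  next
    case False
    have e: "?S = {}"
    proof (rule ccontr)
      assume "?S \<noteq> {}"
      then obtain T where "T \<in> ?S" by blast
      then have "real (card (T - X)) = U \<and> real (card (T \<inter> X)) = V" using key by auto
      then have "U \<in> \<nat> \<and> V \<in> \<nat>" by (metis of_nat_in_Nats)
      then show False using False by simp
    qed
    have "Bin (real (card X)) V * Bin (real (card A) - real (card X)) U = 0"
      using False unfolding Bin_def by auto
    then show ?thesis unfolding e using U_def V_def j_def by simp
  qed
qed

definition supp :: "bool list \<Rightarrow> nat set" where
  "supp y = {i. i < length y \<and> y ! i}"

definition lst :: "nat \<Rightarrow> nat set \<Rightarrow> bool list" where
  "lst n T = map (\<lambda>i. i \<in> T) [0..<n]"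

lemma supp_sub: "supp y \<subseteq> {..<length y}"
  by (auto simp: supp_def)

lemma supp_nth: "i < length y \<Longrightarrow> (i \<in> supp y) = y ! i"
  by (simp add: supp_def)

lemma supp_inj: "inj_on supp (F2n n)"
proof (rule inj_onI)
  fix x y assume x: "x \<in> F2n n" and y: "y \<in> F2n n" and e: "supp x = supp y"
  show "x = y"
  proof (rule nth_equalityI)
    show "length x = length y" using x y by (simp add: F2n_def)
    fix i assume "i < length x"
    then show "x ! i = y ! i" using e supp_nth[of i x] supp_nth[of i y] \<open>length x = length y\<close> by simp
  qed
qed

lemma supp_image: "supp ` F2n n = Pow {..<n}"
proof
  show "supp ` F2n n \<subseteq> Pow {..<n}" using supp_sub by (auto simp: F2n_def)
next
  show "Pow {..<n} \<subseteq> supp ` F2n n"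
  proof
    fix T assume T: "T \<in> Pow {..<n}"
    have "supp (lst n T) = T" using T by (auto simp: supp_def lst_def)
    moreover have "lst n T \<in> F2n n" by (simp add: lst_def F2n_def)
    ultimately show "T \<in> supp ` F2n n" by (metis imageI)
  qed
qed

lemma finite_F2n: "finite (F2n n)"
proof -
  have "finite (supp ` F2n n)" using supp_image by simp
  then show ?thesis using finite_imageD supp_inj by blast
qed

lemma wtH_supp: "wtH y = card (supp y)"
  by (simp add: wtH_def supp_def)

lemma dab10: "length y = length x \<Longrightarrow> dab True False y x = card (supp y - supp x)"
  unfolding dab_def supp_def by (intro arg_cong[where f=card]) auto

lemma dab01: "length y = length x \<Longrightarrow> dab False True y x = card (supp x - supp y)"
  unfolding dab_def supp_def by (intro arg_cong[where f=card]) auto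

lemma disc_supp: "length y = length x \<Longrightarrow>
   disc p q y x = gam p q * real (card (supp y - supp x)) + real (card (supp x - supp y))"
  by (simp add: disc_def dab10 dab01)

lemma beta_facts:
  fixes p q :: real
  assumes "0 < p" "p \<le> q" "q < 1/2"
  shows "0 < q / (1 - p)" "q / (1 - p) < 1" "0 < p / (1 - q)" "p / (1 - q) \<le> q / (1 - p)"
proof -
  show "0 < q / (1 - p)" using assms by simp
  show "q / (1 - p) < 1" using assms by simp
  show "0 < p / (1 - q)" using assms by simp
  have "p * (1 - p) \<le> q * (1 - q)"
  proof -
    have "q * (1 - q) - p * (1 - p) = (q - p) * (1 - q - p)" by (simp add: algebra_simps)
    moreover have "(q - p) * (1 - q - p) \<ge> 0" using assms by simp
    ultimately show ?thesis by linarith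
  qed
  then show "p / (1 - q) \<le> q / (1 - p)" using assms by (simp add: divide_simps mult.commute)
qed

lemma gam_ge1:
  fixes p q :: real
  assumes "0 < p" "p \<le> q" "q < 1/2"
  shows "gam p q \<ge> 1"
proof -
  note b = beta_facts[OF assms]
  have l1: "ln (q / (1 - p)) < 0" using b by simp
  have l2: "ln (p / (1 - q)) \<le> ln (q / (1 - p))" using b by simp
  have "gam p q = ln (p / (1 - q)) / ln (q / (1 - p))" by (simp add: gam_def log_def)
  then show ?thesis using l1 l2 by (simp add: le_divide_eq)
qed

lemma chan_eq:
  fixes p q :: real
  assumes "0 < p" "p \<le> q" "q < 1/2"
  shows "chan p q a b = (if a then 1 - q else 1 - p) *
     (q / (1 - p)) powr ((if a \<and> \<not> b then gam p q else 0) + (if \<not> a \<and> b then 1 else 0))"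
proof -
  note b = beta_facts[OF assms]
  have bne: "q / (1 - p) \<noteq> 1" using b(2) by linarith
  have g: "(q / (1 - p)) powr gam p q = p / (1 - q)"
    unfolding gam_def using b bne by simp
  have o: "(q / (1 - p)) powr 1 = q / (1 - p)" using powr_one[of "q / (1 - p)"] b(1) by linarith
  show ?thesis using assms
    by (cases a; cases b) (simp_all add: chan_def g o)
qed

lemma Pn_formula:
  fixes p q :: real
  assumes "0 < p" "p \<le> q" "q < 1/2" and len: "length y = n" "length x = n"
  shows "Pn p q y x = (1 - q) ^ card (supp y) * (1 - p) ^ (n - card (supp y)) *
                      (q / (1 - p)) powr disc p q y x"
proof -
  define \<beta> where "\<beta> = q / (1 - p)"
  define T where "T = supp y"
  define X where "X = supp x"
  define c where "c = (\<lambda>a. if a then 1 - q else 1 - (p::real))"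
  define e where "e = (\<lambda>a b. (if a \<and> \<not> b then gam p q else 0) + (if \<not> a \<and> b then 1 else (0::real)))"
  have bpos: "\<beta> \<noteq> 0" using beta_facts(1)[OF assms(1-3)] unfolding \<beta>_def by linarith
  have TA: "T \<subseteq> {..<n}" using supp_sub[of y] len T_def by auto
  have XA: "X \<subseteq> {..<n}" using supp_sub[of x] len X_def by auto
  have "Pn p q y x = (\<Prod>i<n. c (i \<in> T) * \<beta> powr e (i \<in> T) (i \<in> X))"
    unfolding Pn_def using len
    by (intro prod.cong) (auto simp: chan_eq[OF assms(1-3)] supp_nth T_def X_def c_def e_def \<beta>_def)
  also have "\<dots> = (\<Prod>i<n. c (i \<in> T)) * \<beta> powr (\<Sum>i<n. e (i \<in> T) (i \<in> X))"
    by (simp add: prod.distrib powr_sum[OF bpos])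
  also have "(\<Prod>i<n. c (i \<in> T)) = (1 - q) ^ card T * (1 - p) ^ (n - card T)"
  proof -
    have "(\<Prod>i<n. c (i \<in> T)) = (\<Prod>i\<in>{..<n} \<inter> {i. i \<in> T}. 1 - q) * (\<Prod>i\<in>{..<n} \<inter> - {i. i \<in> T}. 1 - p)"
      unfolding c_def by (rule prod.If_cases) simp
    moreover have "{..<n} \<inter> {i. i \<in> T} = T" using TA by auto
    moreover have "{..<n} \<inter> - {i. i \<in> T} = {..<n} - T" by auto
    moreover have "card ({..<n} - T) = n - card T" using TA by (simp add: card_Diff_subset finite_subset)
    ultimately show ?thesis by simp
  qed
  also have "(\<Sum>i<n. e (i \<in> T) (i \<in> X)) = disc p q y x"
  proof -
    have "(\<Sum>i<n. e (i \<in> T) (i \<in> X)) = (\<Sum>i<n. if i \<in> T - X then gam p q else 0) + (\<Sum>i<n. if i \<in> X - T then 1 else 0)"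
      unfolding e_def by (simp add: sum.distrib conj_commute)
    also have "\<dots> = gam p q * real (card (T - X)) + real (card (X - T))"
    proof -
      have "{..<n} \<inter> (T - X) = T - X" "{..<n} \<inter> (X - T) = X - T" using TA XA by auto
      then show ?thesis by (simp add: sum.If_cases[where A="{..<n}"] Int_def)
    qed
    finally show ?thesis using disc_supp[of y x p q] len T_def X_def by simp
  qed
  finally show ?thesis unfolding T_def \<beta>_def .
qed

lemma Pn_total:
  fixes p q :: real
  assumes len: "length x = n"
  shows "(\<Sum>y\<in>F2n n. Pn p q y x) = 1"
proof -
  define g where "g = (\<lambda>T. \<Prod>i<n. chan p q (i \<in> T) (x ! i))"
  have "(\<Sum>y\<in>F2n n. Pn p q y x) = (\<Sum>y\<in>F2n n. g (supp y))"
    unfolding Pn_def g_def using len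
    by (intro sum.cong refl prod.cong) (auto simp: F2n_def supp_nth)
  also have "\<dots> = (\<Sum>T\<in>supp ` F2n n. g T)"
    by (simp add: sum.reindex[OF supp_inj])
  also have "\<dots> = (\<Sum>T\<in>Pow {..<n}. (\<Prod>i\<in>T. chan p q True (x ! i)) * (\<Prod>i\<in>{..<n} - T. chan p q False (x ! i)))"
    unfolding supp_image
  proof (rule sum.cong[OF refl])
    fix T assume T: "T \<in> Pow {..<n}"
    have "g T = (\<Prod>i<n. if i \<in> T then chan p q True (x ! i) else chan p q False (x ! i))"
      unfolding g_def by (intro prod.cong) auto
    also have "\<dots> = (\<Prod>i\<in>{..<n} \<inter> {i. i \<in> T}. chan p q True (x ! i)) * (\<Prod>i\<in>{..<n} \<inter> - {i. i \<in> T}. chan p q False (x ! i))"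
      by (rule prod.If_cases) simp
    also have "{..<n} \<inter> {i. i \<in> T} = T" using T by auto
    also have "{..<n} \<inter> - {i. i \<in> T} = {..<n} - T" by auto
    finally show "g T = (\<Prod>i\<in>T. chan p q True (x ! i)) * (\<Prod>i\<in>{..<n} - T. chan p q False (x ! i))" .
  qed
  also have "\<dots> = (\<Prod>i<n. chan p q True (x ! i) + chan p q False (x ! i))"
    by (rule prod_add[symmetric]) simp
  also have "\<dots> = 1" by (rule prod.neutral) (simp add: chan_def)
  finally show ?thesis .
qed

lemma supp_image_filter:
  "supp ` {y \<in> F2n n. Q (supp y)} = {T. T \<subseteq> {..<n} \<and> Q T}"
proof
  show "supp ` {y \<in> F2n n. Q (supp y)} \<subseteq> {T. T \<subseteq> {..<n} \<and> Q T}"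
    using supp_sub by (auto simp: F2n_def)
next
  show "{T. T \<subseteq> {..<n} \<and> Q T} \<subseteq> supp ` {y \<in> F2n n. Q (supp y)}"
  proof
    fix T assume T: "T \<in> {T. T \<subseteq> {..<n} \<and> Q T}"
    then have "T \<in> supp ` F2n n" using supp_image by auto
    then obtain y where "y \<in> F2n n" "T = supp y" by auto
    then show "T \<in> supp ` {y \<in> F2n n. Q (supp y)}" using T by auto
  qed
qed

lemma count_list:
  fixes p q s :: real
  assumes len: "length x = n" and g: "gam p q > -1"
  shows "real (card {y \<in> F2n n. wtH y = i \<and> disc p q y x = s}) = lam p q n i (wtH x) s"
proof -
  let ?Q = "\<lambda>T. card T = i \<and> gam p q * real (card (T - supp x)) + real (card (supp x - T)) = s"
  have e: "{y \<in> F2n n. wtH y = i \<and> disc p q y x = s} = {y \<in> F2n n. ?Q (supp y)}"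
    using len by (auto simp: F2n_def wtH_supp disc_supp)
  have "card {y \<in> F2n n. ?Q (supp y)} = card (supp ` {y \<in> F2n n. ?Q (supp y)})"
    by (rule card_image[symmetric]) (rule inj_on_subset[OF supp_inj], auto)
  also have "\<dots> = card {T. T \<subseteq> {..<n} \<and> ?Q T}" using supp_image_filter[of n ?Q] by simp
  finally have c: "card {y \<in> F2n n. wtH y = i \<and> disc p q y x = s} = card {T. T \<subseteq> {..<n} \<and> ?Q T}"
    using e by simp
  have XA: "supp x \<subseteq> {..<n}" using supp_sub[of x] len by simp
  show ?thesis
    unfolding c using count_cond[OF _ XA g, of i s]
    by (simp add: lam_def wtH_supp conj_assoc)
qed

lemma card_diff_tri:
  assumes fX: "finite X" and fY: "finite Y"
  shows "card (X - Z) \<le> card (X - Y) + card (Y - Z)"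
proof -
  have "card (X - Z) \<le> card ((X - Y) \<union> (Y - Z))"
    by (intro card_mono) (use fX fY in auto)
  also have "\<dots> \<le> card (X - Y) + card (Y - Z)" by (rule card_Un_le)
  finally show ?thesis .
qed

lemma disc_tri:
  fixes p q :: real
  assumes g: "gam p q \<ge> 0" and len: "length x = n" "length y = n" "length z = n"
  shows "disc p q x z \<le> disc p q x y + disc p q y z"
proof -
  have f: "finite (supp w)" for w using supp_sub[of w] finite_subset by blast
  have a: "real (card (supp x - supp z)) \<le> real (card (supp x - supp y)) + real (card (supp y - supp z))"
    using card_diff_tri[OF f f[of y]] by (metis of_nat_add of_nat_le_iff)
  have b: "real (card (supp z - supp x)) \<le> real (card (supp z - supp y)) + real (card (supp y - supp x))"
    using card_diff_tri[OF f f[of y]] by (metis of_nat_add of_nat_le_iff)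
  have "gam p q * real (card (supp x - supp z)) \<le> gam p q * (real (card (supp x - supp y)) + real (card (supp y - supp z)))"
    using mult_left_mono[OF a g] .
  then show ?thesis using b len by (simp add: disc_supp algebra_simps)
qed

lemma disc_swap:
  fixes p q :: real
  assumes len: "length y = length x"
  shows "disc p q y x = disc p q x y + (gam p q - 1) * (real (wtH y) - real (wtH x))"
proof -
  have f: "finite (supp w)" for w using supp_sub[of w] finite_subset by blast
  have c1: "card (supp y) = card (supp y \<inter> supp x) + card (supp y - supp x)" using card_Int_Diff[OF f] by simp
  have c2: "card (supp x) = card (supp y \<inter> supp x) + card (supp x - supp y)" using card_Int_Diff[OF f[of x], of "supp y"]
    by (simp add: Int_commute)
  show ?thesis using len by (simp add: disc_supp wtH_supp c1 c2 algebra_simps)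
qed

lemma Pn_nonneg:
  fixes p q :: real
  assumes "0 < p" "p \<le> q" "q < 1/2"
  shows "Pn p q y x \<ge> 0"
  unfolding Pn_def using assms by (intro prod_nonneg) (simp add: chan_def)

lemma decode:
  fixes p q :: real
  assumes pq: "0 < p" "p \<le> q" "q < 1/2" and C: "C \<subseteq> F2n n" and x: "x \<in> C" and y: "y \<in> F2n n"
    and less: "\<And>x'. x' \<in> C \<Longrightarrow> x' \<noteq> x \<Longrightarrow> disc p q y x < disc p q y x'"
  shows "MLdec p q C y = Some x"
proof -
  note b = beta_facts[OF pq]
  have P: "Pn p q y x' < Pn p q y x" if "x' \<in> C" "x' \<noteq> x" for x'
  proof -
    have l: "length y = n" "length x = n" "length x' = n" using C x y that by (auto simp: F2n_def)
    have K: "(1 - q) ^ card (supp y) * (1 - p) ^ (n - card (supp y)) > 0" using pq by simp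
    have "(q / (1 - p)) powr disc p q y x' < (q / (1 - p)) powr disc p q y x"
      by (rule powr_less_mono'[OF b(1) b(2) less[OF that]])
    then show ?thesis using K l by (simp add: Pn_formula[OF pq] mult_strict_left_mono del: mult_less_cancel_left_pos)
  qed
  have ex: "\<exists>x\<in>C. \<forall>x'\<in>C. x' \<noteq> x \<longrightarrow> Pn p q y x' < Pn p q y x" using x P by blast
  have th: "(THE x. x \<in> C \<and> (\<forall>x'\<in>C. x' \<noteq> x \<longrightarrow> Pn p q y x' < Pn p q y x)) = x"
  proof (rule the_equality)
    show "x \<in> C \<and> (\<forall>x'\<in>C. x' \<noteq> x \<longrightarrow> Pn p q y x' < Pn p q y x)" using x P by blast
  next
    fix z assume z: "z \<in> C \<and> (\<forall>x'\<in>C. x' \<noteq> z \<longrightarrow> Pn p q y x' < Pn p q y z)"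
    show "z = x"
    proof (rule ccontr)
      assume "z \<noteq> x"
      then have "Pn p q y z < Pn p q y x" "Pn p q y x < Pn p q y z" using P z x by auto
      then show False by simp
    qed
  qed
  show ?thesis unfolding MLdec_def using ex th by simp
qed

lemma Sset_finite:
  fixes p q h :: real
  assumes g: "gam p q \<ge> 1"
  shows "finite (Sset p q h)"
proof -
  define N where "N = nat \<lceil>h\<rceil>"
  have "Sset p q h \<subseteq> (\<lambda>(a, b). real a + gam p q * real b) ` ({..N} \<times> {..N})"
  proof
    fix s assume "s \<in> Sset p q h"
    then obtain a b :: nat where s: "s = real a + gam p q * real b" "0 \<le> s" "s < h"
      unfolding Sset_def by auto
    have gb: "real b \<le> gam p q * real b" using g by (simp add: mult_le_cancel_right1)
    have ah: "real a < h" using s gb g by (smt (verit) of_nat_0_le_iff mult_nonneg_nonneg)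
    have bh: "real b < h" using s gb by (smt (verit) of_nat_0_le_iff)
    have "a \<le> N" unfolding N_def using ah by linarith
    moreover have "b \<le> N" unfolding N_def using bh by linarith
    ultimately show "s \<in> (\<lambda>(a, b). real a + gam p q * real b) ` ({..N} \<times> {..N})"
      using s by auto
  qed
  then show ?thesis by (rule finite_subset) simp
qed

lemma disc_in_Sset:
  fixes p q h :: real
  assumes g: "gam p q \<ge> 1" and lt: "disc p q y x < h"
  shows "disc p q y x \<in> Sset p q h"
proof -
  have "disc p q y x = real (dab False True y x) + gam p q * real (dab True False y x)"
    by (simp add: disc_def)
  moreover have "0 \<le> disc p q y x" using g by (simp add: disc_def)
  ultimately show ?thesis using lt unfolding Sset_def by blast
qed

lemma inner_sum:
  fixes p q :: real and h :: "nat \<Rightarrow> real"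
  assumes pq: "0 < p" "p \<le> q" "q < 1/2" and len: "length x = n"
  shows "(\<Sum>y\<in>{y \<in> F2n n. disc p q y x < h (wtH y)}. Pn p q y x) =
    (\<Sum>i\<le>n. (1 - q) ^ i * (1 - p) ^ (n - i) *
       (\<Sum>s\<in>Sset p q (h i). (q / (1 - p)) powr s * lam p q n i (wtH x) s))"
proof -
  have g: "gam p q \<ge> 1" by (rule gam_ge1[OF pq])
  let ?G = "{y \<in> F2n n. disc p q y x < h (wtH y)}"
  have fG: "finite ?G" using finite_F2n by simp
  have wle: "wtH y \<le> n" if "y \<in> F2n n" for y
  proof -
    have "card (supp y) \<le> card {..<length y}" by (rule card_mono) (simp_all add: supp_sub)
    then show ?thesis using that by (simp add: wtH_supp F2n_def)
  qed
  have "(\<Sum>y\<in>?G. Pn p q y x) = (\<Sum>i\<in>{..n}. \<Sum>y\<in>{y \<in> ?G. wtH y = i}. Pn p q y x)"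
    by (rule sum.group[symmetric]) (use fG wle in auto)
  also have "\<dots> = (\<Sum>i\<le>n. (1 - q) ^ i * (1 - p) ^ (n - i) *
       (\<Sum>s\<in>Sset p q (h i). (q / (1 - p)) powr s * lam p q n i (wtH x) s))"
  proof (rule sum.cong[OF refl])
    fix i assume i: "i \<in> {..n}"
    let ?Gi = "{y \<in> ?G. wtH y = i}"
    have fGi: "finite ?Gi" using finite_F2n[of n] by simp
    have "(\<Sum>y\<in>?Gi. Pn p q y x) = (\<Sum>y\<in>?Gi. (1 - q) ^ i * (1 - p) ^ (n - i) * (q / (1 - p)) powr disc p q y x)"
      using len by (intro sum.cong refl) (auto simp: Pn_formula[OF pq] F2n_def wtH_supp)
    also have "\<dots> = (1 - q) ^ i * (1 - p) ^ (n - i) * (\<Sum>y\<in>?Gi. (q / (1 - p)) powr disc p q y x)"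
      by (simp add: sum_distrib_left)
    also have "(\<Sum>y\<in>?Gi. (q / (1 - p)) powr disc p q y x) =
       (\<Sum>s\<in>Sset p q (h i). \<Sum>y\<in>{y \<in> ?Gi. disc p q y x = s}. (q / (1 - p)) powr disc p q y x)"
      by (rule sum.group[symmetric]) (use fGi Sset_finite[OF g] disc_in_Sset[OF g] in auto)
    also have "\<dots> = (\<Sum>s\<in>Sset p q (h i). (q / (1 - p)) powr s * lam p q n i (wtH x) s)"
    proof (rule sum.cong[OF refl])
      fix s assume s: "s \<in> Sset p q (h i)"
      then have sh: "s < h i" by (simp add: Sset_def)
      have e: "{y \<in> ?Gi. disc p q y x = s} = {y \<in> F2n n. wtH y = i \<and> disc p q y x = s}"
        using sh by auto
      have "(\<Sum>y\<in>{y \<in> ?Gi. disc p q y x = s}. (q / (1 - p)) powr disc p q y x)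
          = (\<Sum>y\<in>{y \<in> F2n n. wtH y = i \<and> disc p q y x = s}. (q / (1 - p)) powr s)"
        unfolding e by (intro sum.cong refl) auto
      also have "\<dots> = real (card {y \<in> F2n n. wtH y = i \<and> disc p q y x = s}) * (q / (1 - p)) powr s"
        by simp
      also have "\<dots> = (q / (1 - p)) powr s * lam p q n i (wtH x) s"
        using count_list[OF len, of p q i s] g by simp
      finally show "(\<Sum>y\<in>{y \<in> ?Gi. disc p q y x = s}. (q / (1 - p)) powr disc p q y x)
          = (q / (1 - p)) powr s * lam p q n i (wtH x) s" .
    qed
    finally show "(\<Sum>y\<in>?Gi. Pn p q y x) = (1 - q) ^ i * (1 - p) ^ (n - i) *
       (\<Sum>s\<in>Sset p q (h i). (q / (1 - p)) powr s * lam p q n i (wtH x) s)" .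
  qed
  finally show ?thesis .
qed

lemma general_bound:
  fixes p q :: real and h :: "nat \<Rightarrow> nat \<Rightarrow> real"
  assumes pq: "0 < p" "p \<le> q" "q < 1/2" and C: "C \<subseteq> F2n n" and cC: "card C \<ge> 2"
    and dec: "\<And>x y. x \<in> C \<Longrightarrow> y \<in> F2n n \<Longrightarrow> disc p q y x < h (wtH y) (wtH x) \<Longrightarrow> MLdec p q C y = Some x"
  shows "PUD p q n C \<le> 1 - (1 / real (card C)) *
           (\<Sum>j\<le>n. real (WH C j) * (\<Sum>i\<le>n. (1 - q) ^ i * (1 - p) ^ (n - i) *
              (\<Sum>s\<in>Sset p q (h i j). (q / (1 - p)) powr s * lam p q n i j s)))"
proof -
  define F where "F = (\<lambda>j. \<Sum>i\<le>n. (1 - q) ^ i * (1 - p) ^ (n - i) *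
              (\<Sum>s\<in>Sset p q (h i j). (q / (1 - p)) powr s * lam p q n i j s))"
  have fC: "finite C" using C finite_F2n finite_subset by blast
  have fF: "finite (F2n n)" by (rule finite_F2n)
  have wle: "wtH y \<le> n" if "y \<in> F2n n" for y
  proof -
    have "card (supp y) \<le> card {..<length y}" by (rule card_mono) (simp_all add: supp_sub)
    then show ?thesis using that by (simp add: wtH_supp F2n_def)
  qed
  have each: "(\<Sum>y\<in>{y \<in> F2n n. MLdec p q C y \<noteq> Some x}. Pn p q y x) \<le> 1 - F (wtH x)"
    if x: "x \<in> C" for x
  proof -
    have len: "length x = n" using x C by (auto simp: F2n_def)
    let ?D = "{y \<in> F2n n. MLdec p q C y = Some x}"
    let ?G = "{y \<in> F2n n. disc p q y x < h (wtH y) (wtH x)}"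
    have e: "{y \<in> F2n n. MLdec p q C y \<noteq> Some x} = F2n n - ?D" by auto
    have "(\<Sum>y\<in>{y \<in> F2n n. MLdec p q C y \<noteq> Some x}. Pn p q y x) = 1 - (\<Sum>y\<in>?D. Pn p q y x)"
      unfolding e by (simp add: sum_diff[OF fF] Pn_total[OF len])
    moreover have "(\<Sum>y\<in>?G. Pn p q y x) \<le> (\<Sum>y\<in>?D. Pn p q y x)"
      by (rule sum_mono2) (use fF dec[OF x] Pn_nonneg[OF pq] in auto)
    moreover have "(\<Sum>y\<in>?G. Pn p q y x) = F (wtH x)"
      unfolding F_def by (rule inner_sum[OF pq len, of "\<lambda>i. h i (wtH x)"])
    ultimately show ?thesis by linarith
  qed
  have sumF: "(\<Sum>x\<in>C. F (wtH x)) = (\<Sum>j\<le>n. real (WH C j) * F j)"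
  proof -
    have "(\<Sum>x\<in>C. F (wtH x)) = (\<Sum>j\<in>{..n}. \<Sum>x\<in>{x \<in> C. wtH x = j}. F (wtH x))"
      by (rule sum.group[symmetric]) (use fC wle C in auto)
    also have "\<dots> = (\<Sum>j\<le>n. real (WH C j) * F j)"
      by (intro sum.cong refl) (simp add: WH_def)
    finally show ?thesis .
  qed
  have cpos: "real (card C) > 0" using cC by simp
  have "PUD p q n C \<le> (1 / real (card C)) * (\<Sum>x\<in>C. 1 - F (wtH x))"
    unfolding PUD_def using cpos by (intro mult_left_mono sum_mono each) auto
  also have "\<dots> = (1 / real (card C)) * (real (card C) - (\<Sum>x\<in>C. F (wtH x)))"
    by (simp add: sum_subtractf)
  also have "\<dots> = 1 - (1 / real (card C)) * (\<Sum>x\<in>C. F (wtH x))"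
    using cpos by (simp add: field_simps)
  finally show ?thesis using sumF unfolding F_def by simp
qed

lemma code_disc_le:
  assumes "finite C" "x \<in> C" "x' \<in> C" "x \<noteq> x'"
  shows "code_disc p q C \<le> disc p q x x'" "code_sdisc p q C \<le> sdisc p q x x'"
proof -
  have f1: "finite {disc p q x x' | x x'. x \<in> C \<and> x' \<in> C \<and> x \<noteq> x'}"
    by (rule finite_subset[where B="(\<lambda>(x, x'). disc p q x x') ` (C \<times> C)"]) (use assms(1) in auto)
  have f2: "finite {sdisc p q x x' | x x'. x \<in> C \<and> x' \<in> C \<and> x \<noteq> x'}"
    by (rule finite_subset[where B="(\<lambda>(x, x'). sdisc p q x x') ` (C \<times> C)"]) (use assms(1) in auto)
  show "code_disc p q C \<le> disc p q x x'" unfolding code_disc_def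
    by (rule Min_le[OF f1]) (use assms in blast)
  show "code_sdisc p q C \<le> sdisc p q x x'" unfolding code_sdisc_def
    by (rule Min_le[OF f2]) (use assms in blast)
qed

lemma lin_aux:
  fixes c a b e f D :: real
  assumes "c \<le> a" "a \<le> b + e" "f = b + D" "f < (c + D) / 2"
  shows "f < e"
proof -
  have "2 * f < c + D" using assms(4) by simp
  then show ?thesis using assms(1-3) by linarith
qed

lemma lin_aux2:
  fixes c a b e f D X Y :: real
  assumes "c \<le> a - X" "a \<le> b + e" "f = b + D" "D = Y - X" "f < (c + Y) / 2"
  shows "f < e"
proof -
  have "2 * f < c + Y" using assms(5) by simp
  then show ?thesis using assms(1-4) by linarith
qed

theorem mainTheorem9:
  fixes p q :: real and n :: nat and C :: "bool list set"
  assumes "n \<ge> 2" and "0 < p" and "p \<le> q" and "q < 1/2"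
    and "C \<subseteq> F2n n" and "card C \<ge> 2"
  shows "(PUD p q n C \<le> 1 - (1 / real (card C)) *
           (\<Sum>j\<le>n. real (WH C j) * (\<Sum>i\<le>n. (1 - q) ^ i * (1 - p) ^ (n - i) *
              (\<Sum>s\<in>Sset p q ((code_disc p q C + (gam p q - 1) * (real i - real j)) / 2).
                  (q / (1 - p)) powr s * lam p q n i j s)))) \<and>
         (PUD p q n C \<le> 1 - (1 / real (card C)) *
           (\<Sum>j\<le>n. real (WH C j) * (\<Sum>i\<le>n. (1 - q) ^ i * (1 - p) ^ (n - i) *
              (\<Sum>s\<in>Sset p q ((code_sdisc p q C + real i * (gam p q - 1)) / 2).
                  (q / (1 - p)) powr s * lam p q n i j s))))"
proof -
  note pq = assms(2-4)
  have g: "gam p q \<ge> 1" by (rule gam_ge1[OF pq])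
  have fC: "finite C" using assms(5) finite_F2n finite_subset by blast
  have lenC: "length x = n" if "x \<in> C" for x using that assms(5) by (auto simp: F2n_def)
  have part1: "MLdec p q C y = Some x"
    if x: "x \<in> C" and y: "y \<in> F2n n"
      and lt: "disc p q y x < (code_disc p q C + (gam p q - 1) * (real (wtH y) - real (wtH x))) / 2" for x y
  proof (rule decode[OF pq assms(5) x y])
    fix x' assume x': "x' \<in> C" "x' \<noteq> x"
    have ly: "length y = n" using y by (simp add: F2n_def)
    have "code_disc p q C \<le> disc p q x x'" using code_disc_le(1)[OF fC x x'(1)] x' by simp
    moreover have "disc p q x x' \<le> disc p q x y + disc p q y x'"
      using disc_tri[of p q x n y x'] g lenC[OF x] lenC[OF x'(1)] ly by simp
    moreover have "disc p q y x = disc p q x y + (gam p q - 1) * (real (wtH y) - real (wtH x))"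
      using disc_swap[of y x p q] ly lenC[OF x] by simp
    ultimately show "disc p q y x < disc p q y x'" using lt lin_aux by blast
  qed
  have part2: "MLdec p q C y = Some x"
    if x: "x \<in> C" and y: "y \<in> F2n n"
      and lt: "disc p q y x < (code_sdisc p q C + real (wtH y) * (gam p q - 1)) / 2" for x y
  proof (rule decode[OF pq assms(5) x y])
    fix x' assume x': "x' \<in> C" "x' \<noteq> x"
    have ly: "length y = n" using y by (simp add: F2n_def)
    have "code_sdisc p q C \<le> disc p q x x' - real (wtH x) * (gam p q - 1)"
      using code_disc_le(2)[OF fC x x'(1)] x' by (simp add: sdisc_def)
    moreover have "disc p q x x' \<le> disc p q x y + disc p q y x'"
      using disc_tri[of p q x n y x'] g lenC[OF x] lenC[OF x'(1)] ly by simp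
    moreover have "disc p q y x = disc p q x y + (gam p q - 1) * (real (wtH y) - real (wtH x))"
      using disc_swap[of y x p q] ly lenC[OF x] by simp
    moreover have "(gam p q - 1) * (real (wtH y) - real (wtH x)) = real (wtH y) * (gam p q - 1) - real (wtH x) * (gam p q - 1)"
      by (simp add: algebra_simps)
    ultimately show "disc p q y x < disc p q y x'" using lt lin_aux2 by blast
  qed
  show ?thesis
  proof
    show "PUD p q n C \<le> 1 - (1 / real (card C)) *
           (\<Sum>j\<le>n. real (WH C j) * (\<Sum>i\<le>n. (1 - q) ^ i * (1 - p) ^ (n - i) *
              (\<Sum>s\<in>Sset p q ((code_disc p q C + (gam p q - 1) * (real i - real j)) / 2).
                  (q / (1 - p)) powr s * lam p q n i j s)))"
      by (rule general_bound[OF pq assms(5) assms(6), of "\<lambda>i j. (code_disc p q C + (gam p q - 1) * (real i - real j)) / 2"])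
         (rule part1; assumption)
    show "PUD p q n C \<le> 1 - (1 / real (card C)) *
           (\<Sum>j\<le>n. real (WH C j) * (\<Sum>i\<le>n. (1 - q) ^ i * (1 - p) ^ (n - i) *
              (\<Sum>s\<in>Sset p q ((code_sdisc p q C + real i * (gam p q - 1)) / 2).
                  (q / (1 - p)) powr s * lam p q n i j s)))"
      by (rule general_bound[OF pq assms(5) assms(6), of "\<lambda>i j. (code_sdisc p q C + real i * (gam p q - 1)) / 2"])
         (rule part2; assumption)
  qed
qed

end
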